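(* Let $\mu$ be a Borel probability measure on $\mathbb{R}$ with mean $0$ and variance $1$, and let $\mu_n$ be as in the context. For any $\alpha,\beta>0$ there is $N$ such that for all $n\ge N$ the function $z\mapsto \sqrt n\,\varphi_\mu(\sqrt n z)$ is defined on all of $\Gamma_{\alpha,\beta}$ and agrees with $\varphi_{\mu_n}(z)$ at every $z\in\Gamma_{\alpha,\beta}$ where $\varphi_{\mu_n}$ is also defined; moreover $\sup_{z\in\Gamma_{\alpha,\beta}}\left|\sqrt n\,\varphi_\mu(\sqrt n z)-z^{-1}\right|\to 0$ as $n\to\infty$.
   Context: For a Borel probability measure $\nu$ on $\mathbb{R}$, the Cauchy transform is $G_\nu(z)=\int_{\mathbb{R}}\frac{d\nu(t)}{z-t}$ for $z\in\mathbb{C}^+=\{\Im z>0\}$, and $F_\nu(z)=1/G_\nu(z)$. Where $F_\nu$ has an analytic right inverse $F_\nu^{-1}$, define $\varphi_\nu(z)=F_\nu^{-1}(z)-z$; for $\nu$ with mean $0$ and variance $1$, $\varphi_\nu$ is defined on $\{\Im z>2\}$. For $\alpha,\beta>0$, $\Gamma_{\alpha,\beta}=\{z\in\mathbb{C}^+:\Im z>\alpha|\Re z|,\ |z|>\beta\}$. $\boxplus$ denotes free additive convolution. Given $\mu$, $\mu_n$ denotes the distribution of $n^{-1/2}(X_1+\dots+X_n)$ where $X_1,\dots,X_n$ are freely independent with common distribution $\mu$; equivalently $\mu_n(B)=\mu^{\boxplus n}(\sqrt n\,B)$. *)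

theory Defs
  imports "HOL-Probability.Probability"
begin

definition upper_half :: "complex set" where
  "upper_half = {z. Im z > 0}"

definition cauchy_transform :: "real measure \<Rightarrow> complex \<Rightarrow> complex" where
  "cauchy_transform \<nu> z = (\<integral>t. 1 / (z - complex_of_real t) \<partial>\<nu>)"

definition F_transform :: "real measure \<Rightarrow> complex \<Rightarrow> complex" where
  "F_transform \<nu> z = 1 / cauchy_transform \<nu> z"

definition trunc_cone :: "real \<Rightarrow> real \<Rightarrow> complex set" where
  "trunc_cone \<alpha> \<beta> = {z. Im z > 0 \<and> Im z > \<alpha> * \<bar>Re z\<bar> \<and> cmod z > \<beta>}"

definition admissible_dom :: "complex set \<Rightarrow> bool" where
  "admissible_dom U \<longleftrightarrow> open U \<and> convex U \<and> U \<subseteq> upper_half \<and>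
     (\<exists>y0. \<forall>y\<ge>y0. \<i> * complex_of_real y \<in> U)"

definition right_inverse_branch ::
    "real measure \<Rightarrow> complex set \<Rightarrow> (complex \<Rightarrow> complex) \<Rightarrow> bool" where
  "right_inverse_branch \<nu> U h \<longleftrightarrow> admissible_dom U \<and> h holomorphic_on U \<and>
     h ` U \<subseteq> upper_half \<and> (\<forall>w\<in>U. F_transform \<nu> (h w) = w) \<and>
     ((\<lambda>y. h (\<i> * complex_of_real y) / (\<i> * complex_of_real y)) \<longlongrightarrow> 1) at_top"

definition phi_dom :: "real measure \<Rightarrow> complex set" where
  "phi_dom \<nu> = \<Union>{U. \<exists>h. right_inverse_branch \<nu> U h}"

text \<open>Voiculescu transform phi(w) = F^{-1}(w) - w (meaningful for w in phi_dom).\<close>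
definition voiculescu :: "real measure \<Rightarrow> complex \<Rightarrow> complex" where
  "voiculescu \<nu> w = (SOME c. \<exists>U h. right_inverse_branch \<nu> U h \<and> w \<in> U \<and> c = h w - w)"

definition borel_prob :: "real measure \<Rightarrow> bool" where
  "borel_prob M \<longleftrightarrow> prob_space M \<and> sets M = sets borel"

text \<open>rho is the free additive convolution of mu and nu (Bercovici--Voiculescu
  characterisation: phi_rho = phi_mu + phi_nu on a common truncated cone).\<close>
definition is_free_conv :: "real measure \<Rightarrow> real measure \<Rightarrow> real measure \<Rightarrow> bool" where
  "is_free_conv \<mu> \<nu> \<rho> \<longleftrightarrow> borel_prob \<mu> \<and> borel_prob \<nu> \<and> borel_prob \<rho> \<and>
     (\<exists>\<alpha> \<beta>. \<alpha> > 0 \<and> \<beta> > 0 \<and>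
        trunc_cone \<alpha> \<beta> \<subseteq> phi_dom \<mu> \<inter> phi_dom \<nu> \<inter> phi_dom \<rho> \<and>
        (\<forall>z\<in>trunc_cone \<alpha> \<beta>. voiculescu \<rho> z = voiculescu \<mu> z + voiculescu \<nu> z))"

definition free_powers :: "real measure \<Rightarrow> (nat \<Rightarrow> real measure) \<Rightarrow> bool" where
  "free_powers \<mu> P \<longleftrightarrow> P 1 = \<mu> \<and> (\<forall>k\<ge>1. is_free_conv (P k) \<mu> (P (Suc k)))"

text \<open>mu_n(B) = P n (sqrt n * B), i.e. the image of P n under x -> x / sqrt n.\<close>
definition normalized_power :: "(nat \<Rightarrow> real measure) \<Rightarrow> nat \<Rightarrow> real measure" where
  "normalized_power P n = distr (P n) borel (\<lambda>x. x / sqrt (real n))"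

end

theory Submission
  imports Defs "HOL-Complex_Analysis.Complex_Analysis"
begin

lemma meas_borel: "sets M = sets borel \<Longrightarrow> f \<in> borel_measurable borel \<Longrightarrow> f \<in> borel_measurable M"
  using measurable_cong_sets[of M borel borel borel] by simp

lemma norm_inv_le_Im:
  assumes "Im z > 0" shows "cmod (1 / (z - complex_of_real t)) \<le> 1 / Im z"
proof -
  have "Im z \<le> cmod (z - complex_of_real t)" using abs_Im_le_cmod[of "z - of_real t"] assms by simp
  then show ?thesis using assms by (simp add: norm_divide divide_simps)
qed

locale mv =
  fixes \<mu> :: "real measure"
  assumes ps: "prob_space \<mu>" and sb: "sets \<mu> = sets borel"
    and i2: "integrable \<mu> (\<lambda>x. x ^ 2)"
    and m0: "(\<integral>x. x \<partial>\<mu>) = 0"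
    and v1: "(\<integral>x. x ^ 2 \<partial>\<mu>) = 1"
begin

interpretation P: prob_space \<mu> by (rule ps)

lemma meas: "f \<in> borel_measurable borel \<Longrightarrow> f \<in> borel_measurable \<mu>"
  by (rule meas_borel[OF sb])

lemma int_bdd:
  fixes f :: "real \<Rightarrow> complex"
  assumes "f \<in> borel_measurable borel" "\<And>x. norm (f x) \<le> B"
  shows "integrable \<mu> f"
  using assms by (intro P.integrable_const_bound[where B=B]) (auto intro: meas)

lemma abs_le_sq: "\<bar>x::real\<bar> \<le> 1 + x^2"
proof (cases "\<bar>x\<bar> \<le> 1")
  case True then show ?thesis by (simp add: add_increasing2)
next
  case False
  then have "\<bar>x\<bar> * 1 \<le> \<bar>x\<bar> * \<bar>x\<bar>" by (intro mult_left_mono) auto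
  then show ?thesis by (simp add: power2_eq_square)
qed

lemma i1: "integrable \<mu> (\<lambda>x. x)"
proof (rule Bochner_Integration.integrable_bound[of _ "\<lambda>x. 1 + x^2"])
  show "integrable \<mu> (\<lambda>x. 1 + x^2)" using i2 by auto
  show "(\<lambda>x. x) \<in> borel_measurable \<mu>" by (intro meas) auto
  show "AE x in \<mu>. norm x \<le> norm (1 + x^2)"
    by (intro AE_I2) (use abs_le_sq in auto)
qed

lemma m1: "(\<lambda>t::real. 1/(z - complex_of_real t)) \<in> borel_measurable borel" by measurable
lemma m2: "(\<lambda>t::real. complex_of_real (t^2) /(z - complex_of_real t)) \<in> borel_measurable borel" by measurable
lemma m3: "(\<lambda>t::real. complex_of_real (t^3) /(z - complex_of_real t)) \<in> borel_measurable borel" by measurable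
lemma m4: "(\<lambda>t::real. complex_of_real (t^2) /(z - complex_of_real t) / (w - complex_of_real t)) \<in> borel_measurable borel" by measurable

lemma int_G: "Im z > 0 \<Longrightarrow> integrable \<mu> (\<lambda>t. 1/(z - complex_of_real t))"
  by (rule int_bdd[OF m1 norm_inv_le_Im])

lemma int_bound_sq:
  fixes f :: "real \<Rightarrow> complex"
  assumes "f \<in> borel_measurable borel" "\<And>t. cmod (f t) \<le> C * t^2" "C \<ge> 0"
  shows "integrable \<mu> f" "cmod (\<integral>t. f t \<partial>\<mu>) \<le> C"
proof -
  have ic: "integrable \<mu> (\<lambda>t. C * t^2)" using i2 by auto
  show i: "integrable \<mu> f"
    by (rule Bochner_Integration.integrable_bound[OF ic]) (use assms in \<open>auto intro: meas\<close>)
  have "cmod (\<integral>t. f t \<partial>\<mu>) \<le> (\<integral>t. cmod (f t) \<partial>\<mu>)" by (rule integral_norm_bound)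
  also have "\<dots> \<le> (\<integral>t. C * t^2 \<partial>\<mu>)"
    by (intro integral_mono i ic integrable_norm assms(2))
  also have "\<dots> = C" using v1 by simp
  finally show "cmod (\<integral>t. f t \<partial>\<mu>) \<le> C" .
qed

lemma bound_t2:
  assumes "Im z > 0"
  shows "cmod (complex_of_real (t^2) / (z - complex_of_real t)) \<le> (1 / Im z) * t^2"
proof -
  have "cmod (complex_of_real (t^2) / (z - complex_of_real t)) = t^2 * cmod (1 / (z - complex_of_real t))"
    by (simp add: norm_divide norm_power)
  also have "\<dots> \<le> t^2 * (1 / Im z)" by (intro mult_left_mono norm_inv_le_Im assms) auto
  finally show ?thesis by simp
qed

definition Q where "Q z = (\<integral>t. complex_of_real (t^2) / (z - complex_of_real t) \<partial>\<mu>)"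

lemma Q_int: "Im z > 0 \<Longrightarrow> integrable \<mu> (\<lambda>t. complex_of_real (t^2) / (z - complex_of_real t))"
  by (rule int_bound_sq(1)[OF m2 bound_t2]) auto
lemma Q_bound: "Im z > 0 \<Longrightarrow> cmod (Q z) \<le> 1 / Im z"
  unfolding Q_def by (rule int_bound_sq(2)[OF m2 bound_t2]) auto

lemma G_key:
  assumes "Im z > 0"
  shows "z * cauchy_transform \<mu> z - 1 = Q z / z"
proof -
  have z0: "z \<noteq> 0" using assms by auto
  have nz: "z - complex_of_real t \<noteq> 0" for t using assms by (auto simp: complex_eq_iff)
  have ig: "integrable \<mu> (\<lambda>t. z * (1 / (z - complex_of_real t)))"
    by (rule integrable_mult_right[OF int_G[OF assms]])
  have "z * cauchy_transform \<mu> z - 1 = (\<integral>t. z * (1 / (z - complex_of_real t)) \<partial>\<mu>) - (\<integral>t. 1 \<partial>\<mu>)"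
    using P.prob_space integral_mult_right_zero[of \<mu> z "\<lambda>t. 1 / (z - complex_of_real t)"]
    by (simp add: cauchy_transform_def)
  also have "\<dots> = (\<integral>t. z * (1 / (z - complex_of_real t)) - 1 \<partial>\<mu>)"
    by (rule Bochner_Integration.integral_diff[symmetric, OF ig]) auto
  also have "\<dots> = (\<integral>t. z / (z - complex_of_real t) - 1 \<partial>\<mu>)" by simp
  also have "\<dots> = (\<integral>t. complex_of_real t / z + complex_of_real (t^2) / (z - complex_of_real t) / z \<partial>\<mu>)"
  proof (intro Bochner_Integration.integral_cong refl)
    fix t
    show "z / (z - complex_of_real t) - 1 = complex_of_real t / z + complex_of_real (t^2) / (z - complex_of_real t) / z"
      using z0 nz[of t] by (simp add: field_simps power2_eq_square)
  qed
  also have "\<dots> = (\<integral>t. complex_of_real t / z \<partial>\<mu>) + (\<integral>t. complex_of_real (t^2) / (z - complex_of_real t) / z \<partial>\<mu>)"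
    by (intro Bochner_Integration.integral_add integrable_divide Q_int assms)
       (use i1 in auto)
  also have "\<dots> = Q z / z" 
    using m0 integral_divide_zero[of \<mu> "\<lambda>t. complex_of_real (t^2) / (z - complex_of_real t)" z]
    by (simp add: Q_def)
  finally show ?thesis .
qed

end

lemma (in prob_space) int_norm_le_const:
  fixes f :: "'a \<Rightarrow> 'b::{banach,second_countable_topology}"
  assumes "integrable M f" "\<And>x. norm (f x) \<le> c"
  shows "norm (\<integral>x. f x \<partial>M) \<le> c"
proof -
  have "norm (\<integral>x. f x \<partial>M) \<le> (\<integral>x. norm (f x) \<partial>M)" by (rule integral_norm_bound)
  also have "\<dots> \<le> (\<integral>x. c \<partial>M)" by (intro integral_mono assms integrable_norm) auto
  also have "\<dots> = c" by (simp add: prob_space)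
  finally show ?thesis .
qed

lemma alg_id:
  fixes a b :: complex
  assumes "a \<noteq> 0" "b \<noteq> 0" "a \<noteq> b"
  shows "(1/a - 1/b) / (a - b) + 1/b^2 = (a - b) * (1/a) * (1/b)^2"
proof -
  have "a - b \<noteq> 0" using assms by simp
  then show ?thesis using assms by (simp add: field_simps power2_eq_square)
qed

context mv begin

interpretation P: prob_space \<mu> by (rule ps)

lemma G_deriv:
  assumes z: "Im z > 0"
  shows "(cauchy_transform \<mu> has_field_derivative
           (- (\<integral>t. 1 / (z - complex_of_real t)^2 \<partial>\<mu>))) (at z)"
proof -
  define D where "D = - (\<integral>t. 1 / (z - complex_of_real t)^2 \<partial>\<mu>)"
  define K where "K = 2 / Im z ^ 3"
  have iD: "integrable \<mu> (\<lambda>t. 1 / (z - complex_of_real t)^2)"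
  proof (rule int_bdd[where B="(1/Im z)^2"])
    show "(\<lambda>t. 1 / (z - complex_of_real t)^2) \<in> borel_measurable borel" by measurable
    fix t
    have "cmod (1 / (z - complex_of_real t)^2) = (cmod (1 / (z - complex_of_real t)))^2"
      by (simp add: norm_divide norm_power power_one_over)
    also have "\<dots> \<le> (1/Im z)^2" by (intro power_mono norm_inv_le_Im z) auto
    finally show "cmod (1 / (z - complex_of_real t)^2) \<le> (1/Im z)^2" .
  qed
  have ev: "\<forall>\<^sub>F y in at z. cmod ((cauchy_transform \<mu> y - cauchy_transform \<mu> z) / (y - z) - D) \<le> K * cmod (y - z)"
  proof -
    have "\<forall>\<^sub>F y in at z. y \<noteq> z \<and> y \<in> ball z (Im z / 2)"
      unfolding eventually_at using z by (intro exI[of _ "Im z / 2"]) (auto simp: dist_commute)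
    then show ?thesis
    proof eventually_elim
      case (elim y)
      have yz: "cmod (y - z) < Im z / 2" and yne: "y \<noteq> z" using elim by (auto simp: dist_norm norm_minus_commute)
      have "\<bar>Im y - Im z\<bar> \<le> cmod (y - z)" using abs_Im_le_cmod[of "y - z"] by simp
      then have y: "Im y \<ge> Im z / 2" using yz by linarith
      then have y0: "Im y > 0" using z by linarith
      have iy: "integrable \<mu> (\<lambda>t. 1/(y - complex_of_real t))" by (rule int_G[OF y0])
      have iz: "integrable \<mu> (\<lambda>t. 1/(z - complex_of_real t))" by (rule int_G[OF z])
      have "(cauchy_transform \<mu> y - cauchy_transform \<mu> z) / (y - z) - D
          = (\<integral>t. (1/(y - complex_of_real t) - 1/(z - complex_of_real t)) / (y - z)
                 + 1 / (z - complex_of_real t)^2 \<partial>\<mu>)"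
        using iy iz iD unfolding D_def cauchy_transform_def
        by (simp add: Bochner_Integration.integral_add Bochner_Integration.integral_diff)
      also have "\<dots> = (\<integral>t. (y - z) * (1/(y - complex_of_real t)) * (1 / (z - complex_of_real t))^2 \<partial>\<mu>)"
      proof (intro Bochner_Integration.integral_cong refl)
        fix t
        have a: "y - complex_of_real t \<noteq> 0" using y0 by (auto simp: complex_eq_iff)
        have b: "z - complex_of_real t \<noteq> 0" using z by (auto simp: complex_eq_iff)
        show "(1/(y - complex_of_real t) - 1/(z - complex_of_real t)) / (y - z) + 1 / (z - complex_of_real t)^2
              = (y - z) * (1/(y - complex_of_real t)) * (1 / (z - complex_of_real t))^2" (is "?l = ?r")
        proof -
          have e: "y - z = (y - complex_of_real t) - (z - complex_of_real t)" by simp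
          have ab: "y - complex_of_real t \<noteq> z - complex_of_real t" using yne by simp
          show "?l = ?r" unfolding e by (rule alg_id[OF a b ab])
        qed
      qed
      also have "cmod \<dots> \<le> cmod (y - z) * (2 / Im z) * (1 / Im z)^2"
      proof -
        have bd: "cmod ((y - z) * (1/(y - complex_of_real t)) * (1 / (z - complex_of_real t))^2)
              \<le> cmod (y - z) * (2 / Im z) * (1 / Im z)^2" for t
        proof -
          have "cmod (1/(y - complex_of_real t)) \<le> 1 / Im y" by (rule norm_inv_le_Im[OF y0])
          also have "\<dots> \<le> 2 / Im z" using y z by (simp add: divide_simps)
          finally have 1: "cmod (1/(y - complex_of_real t)) \<le> 2 / Im z" .
          have 2: "cmod ((1 / (z - complex_of_real t))^2) \<le> (1 / Im z)^2"
            unfolding norm_power by (intro power_mono norm_inv_le_Im z) auto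
          show ?thesis
            unfolding norm_mult using z by (intro mult_mono 1 2 mult_left_mono) auto
        qed
        have "integrable \<mu> (\<lambda>t. (y - z) * (1/(y - complex_of_real t)) * (1 / (z - complex_of_real t))^2)"
          by (rule int_bdd[OF _ bd]) measurable
        then show ?thesis by (rule P.int_norm_le_const[OF _ bd])
      qed
      also have "\<dots> = K * cmod (y - z)" by (simp add: K_def power_one_over field_simps power3_eq_cube power2_eq_square)
      finally show ?case .
    qed
  qed
  have "((\<lambda>y. (cauchy_transform \<mu> y - cauchy_transform \<mu> z) / (y - z) - D) \<longlongrightarrow> 0) (at z)"
  proof (rule Lim_null_comparison[OF ev])
    have "((\<lambda>y. cmod (y - z)) \<longlongrightarrow> cmod (z - z)) (at z)" by (intro tendsto_intros)
    then show "((\<lambda>y. K * cmod (y - z)) \<longlongrightarrow> 0) (at z)" using tendsto_mult_right_zero by auto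
  qed
  then have "((\<lambda>y. (cauchy_transform \<mu> y - cauchy_transform \<mu> z) / (y - z)) \<longlongrightarrow> D) (at z)"
    by (rule LIM_zero_cancel)
  then show ?thesis unfolding D_def[symmetric] by (simp add: has_field_derivative_iff)
qed

lemma G_holo: "cauchy_transform \<mu> holomorphic_on {z. Im z > 0}"
  using G_deriv by (subst holomorphic_on_open) (auto simp: open_halfspace_Im_gt)

lemma F_bound:
  assumes z: "Im z \<ge> 2"
  shows "cauchy_transform \<mu> z \<noteq> 0" "cmod (F_transform \<mu> z - z) \<le> 2 / Im z"
proof -
  have z0: "Im z > 0" using z by simp
  have zn: "z \<noteq> 0" using z0 by auto
  have cz: "Im z \<le> cmod z" using abs_Im_le_cmod[of z] by simp
  define q where "q = Q z / z"
  have kq: "z * cauchy_transform \<mu> z = 1 + q" using G_key[OF z0] by (simp add: q_def algebra_simps)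
  have Qb: "cmod (Q z) \<le> 1 / Im z" by (rule Q_bound[OF z0])
  have "cmod q \<le> (1 / Im z) / Im z"
    unfolding q_def norm_divide using Qb cz z0
    by (intro frac_le) auto
  also have "\<dots> \<le> 1/4" using z by (simp add: divide_simps) (metis mult_mono[of 2 "Im z" 2 "Im z"] order_trans[of 0 2] zero_le_numeral mult_2_right numeral_Bit0 order.refl numeral_times_numeral semiring_norm(12) z)
  finally have q4: "cmod q \<le> 1/4" .
  have "1 - cmod q \<le> cmod (1 + q)" using norm_triangle_ineq[of "1+q" "-q"] by simp
  then have q1: "cmod (1 + q) \<ge> 3/4" using q4 by linarith
  then have q0: "1 + q \<noteq> 0" by auto
  show G0: "cauchy_transform \<mu> z \<noteq> 0" using kq q0 by auto
  have "F_transform \<mu> z - z = - (Q z) / (1 + q)"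
  proof -
    have G: "cauchy_transform \<mu> z = (1 + q) / z" using kq zn by (simp add: field_simps)
    show ?thesis unfolding F_transform_def G using zn q0 by (simp add: q_def field_simps)
  qed
  then have "cmod (F_transform \<mu> z - z) = cmod (Q z) / cmod (1 + q)" by (simp add: norm_divide)
  also have "\<dots> \<le> (1 / Im z) / (3/4)" using Qb q1 z0 by (intro frac_le) auto
  also have "\<dots> \<le> 2 / Im z" using z0 by (simp add: divide_simps)
  finally show "cmod (F_transform \<mu> z - z) \<le> 2 / Im z" .
qed

lemma F_holo: "F_transform \<mu> holomorphic_on {z. Im z > 2}"
proof -
  have "(\<lambda>z. 1 / cauchy_transform \<mu> z) holomorphic_on {z. Im z > 2}"
    using F_bound(1) by (intro holomorphic_intros holomorphic_on_subset[OF G_holo]) auto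
  then show ?thesis unfolding F_transform_def[abs_def] .
qed

end

lemma gen_deriv:
  fixes f :: "complex \<Rightarrow> complex" and c M :: real
  assumes holf: "f holomorphic_on {z. Im z > c}" and c: "c \<ge> 0" and M: "M > 0"
    and bd: "\<And>z. Im z > c \<Longrightarrow> cmod (f z - z) \<le> M / Im z"
    and z: "Im z > 2*c + 4*M + 4"
  shows "cmod (deriv (\<lambda>z. f z - z) z) \<le> 1/2"
proof -
  define g where "g = (\<lambda>z. f z - z)"
  define r where "r = (Im z - c) / 2"
  have r0: "r > 0" using z c M by (simp add: r_def)
  have sub: "cball z r \<subseteq> {z. Im z > c}"
  proof
    fix x assume "x \<in> cball z r"
    then have "cmod (z - x) \<le> r" by (simp add: dist_norm)
    moreover have "\<bar>Im z - Im x\<bar> \<le> cmod (z - x)" using abs_Im_le_cmod[of "z - x"] by simp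
    ultimately have "Im x \<ge> Im z - r" by linarith
    moreover have "Im z - r = (Im z + c) / 2" by (simp add: r_def field_simps)
    ultimately show "x \<in> {z. Im z > c}" using z c M by simp
  qed
  have holg: "g holomorphic_on {z. Im z > c}" unfolding g_def by (intro holomorphic_intros holf)
  have "cmod ((deriv ^^ 1) g z) \<le> fact 1 * (2 * M / Im z) / r ^ 1"
  proof (rule Cauchy_inequality)
    show "g holomorphic_on ball z r" using holomorphic_on_subset[OF holg] sub ball_subset_cball by blast
    show "continuous_on (cball z r) g"
      using holomorphic_on_imp_continuous_on[OF holomorphic_on_subset[OF holg sub]] .
    show "0 < r" by fact
    fix x assume x: "cmod (z - x) = r"
    have "\<bar>Im z - Im x\<bar> \<le> cmod (z - x)" using abs_Im_le_cmod[of "z - x"] by simp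
    then have "\<bar>Im z - Im x\<bar> * 2 \<le> Im z - c" using x by (simp add: r_def)
    moreover have "(Im z - Im x) * 2 \<le> \<bar>Im z - Im x\<bar> * 2" by (intro mult_right_mono abs_ge_self) simp
    ultimately have "(Im z - Im x) * 2 \<le> Im z - c" by (rule order_trans[rotated])
    then have xi: "Im x \<ge> Im z / 2" using z c by simp
    have "Im x > c" using sub x by (auto simp: dist_norm)
    then have "cmod (g x) \<le> M / Im x" unfolding g_def by (rule bd)
    also have "\<dots> \<le> M / (Im z / 2)" using xi M z c by (intro divide_left_mono) auto
    finally show "cmod (g x) \<le> 2 * M / Im z" by (simp add: mult.commute)
  qed
  then have d: "cmod (deriv g z) \<le> 2 * M / Im z / r" by simp
  have rz: "r \<ge> Im z / 4" using z c M by (simp add: r_def)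
  have iz: "Im z > 0" using z c M by linarith
  have "2 * M / Im z / r \<le> 2 * M / Im z / (Im z / 4)"
    using rz iz M by (intro divide_left_mono) auto
  also have "\<dots> = 8 * M / (Im z * Im z)" using iz by (simp add: field_simps)
  also have "\<dots> \<le> 1/2"
  proof -
    have "Im z * Im z \<ge> (4*M+4) * (4*M+4)" using z c M by (intro mult_mono) auto
    moreover have "(4*M+4) * (4*M+4) \<ge> 16 * M" using M by (simp add: algebra_simps)
    ultimately show ?thesis using iz M by (simp add: divide_simps)
  qed
  finally show ?thesis using d unfolding g_def by linarith
qed

lemma gen_lip:
  fixes f :: "complex \<Rightarrow> complex" and c M :: real
  assumes holf: "f holomorphic_on {z. Im z > c}" and c: "c \<ge> 0" and M: "M > 0"
    and bd: "\<And>z. Im z > c \<Longrightarrow> cmod (f z - z) \<le> M / Im z"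
    and z1: "Im z1 > 2*c + 4*M + 4" and z2: "Im z2 > 2*c + 4*M + 4"
  shows "cmod ((f z1 - z1) - (f z2 - z2)) \<le> cmod (z1 - z2) / 2"
proof -
  define S where "S = {z. Im z > 2*c + 4*M + 4}"
  have holg: "(\<lambda>z. f z - z) holomorphic_on S"
    by (intro holomorphic_intros holomorphic_on_subset[OF holf]) (use c M in \<open>auto simp: S_def\<close>)
  have oS: "open S" unfolding S_def by (rule open_halfspace_Im_gt)
  have "cmod ((f z1 - z1) - (f z2 - z2)) \<le> 1/2 * cmod (z1 - z2)"
  proof (rule field_differentiable_bound[where S=S and f'="deriv (\<lambda>z. f z - z)"])
    show "convex S" unfolding S_def by (rule convex_halfspace_Im_gt)
    show "((\<lambda>z. f z - z) has_field_derivative deriv (\<lambda>z. f z - z) z) (at z within S)" if "z \<in> S" for z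
      using holomorphic_derivI[OF holg oS that] .
    show "cmod (deriv (\<lambda>z. f z - z) z) \<le> 1/2" if "z \<in> S" for z
      using gen_deriv[OF holf c M bd] that by (auto simp: S_def)
    show "z1 \<in> S" "z2 \<in> S" using z1 z2 by (auto simp: S_def)
  qed
  then show ?thesis by simp
qed

lemma gen_ex:
  fixes f :: "complex \<Rightarrow> complex" and c M :: real
  assumes holf: "f holomorphic_on {z. Im z > c}" and c: "c \<ge> 0" and M: "M > 0"
    and bd: "\<And>z. Im z > c \<Longrightarrow> cmod (f z - z) \<le> M / Im z"
    and v: "Im v > 2*c + 4*M + 5"
  shows "\<exists>\<zeta>. cmod (\<zeta> - v) \<le> 1 \<and> f \<zeta> = v"
proof -
  define T where "T = (\<lambda>\<zeta>. v - (f \<zeta> - \<zeta>))"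
  have inS: "Im \<zeta> > 2*c + 4*M + 4" if "\<zeta> \<in> cball v 1" for \<zeta>
  proof -
    have "cmod (v - \<zeta>) \<le> 1" using that by (simp add: dist_norm)
    moreover have "\<bar>Im v - Im \<zeta>\<bar> \<le> cmod (v - \<zeta>)" using abs_Im_le_cmod[of "v - \<zeta>"] by simp
    ultimately show ?thesis using v by linarith
  qed
  have "\<exists>!x\<in>cball v 1. T x = x"
  proof (rule Banach_fix[where c="1/2"])
    show "Topological_Spaces.complete (cball v 1)" by (rule compact_imp_complete[OF compact_cball])
    show "cball v 1 \<noteq> {}" by simp
    show "T ` cball v 1 \<subseteq> cball v 1"
    proof clarify
      fix \<zeta> assume z: "\<zeta> \<in> cball v 1"
      have i: "Im \<zeta> > 2*c + 4*M + 4" by (rule inS[OF z])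
      then have "cmod (f \<zeta> - \<zeta>) \<le> M / Im \<zeta>" using c M by (intro bd) linarith
      also have "\<dots> \<le> M / (4*M + 4)" using i c M by (intro divide_left_mono) auto
      also have "\<dots> \<le> 1" using M by (simp add: divide_simps)
      finally show "T \<zeta> \<in> cball v 1" by (simp add: T_def dist_norm)
    qed
    show "dist (T x) (T y) \<le> 1/2 * dist x y" if "x \<in> cball v 1" "y \<in> cball v 1" for x y
    proof -
      have "T x - T y = -((f x - x) - (f y - y))" by (simp add: T_def)
      then have "dist (T x) (T y) = cmod ((f x - x) - (f y - y))"
        by (simp add: dist_norm norm_minus_commute[of "f y - y"])
      then show ?thesis using gen_lip[OF holf c M bd inS[OF that(1)] inS[OF that(2)]]
        by (simp add: dist_norm)
    qed
  qed auto
  then obtain \<zeta> where "\<zeta> \<in> cball v 1" "T \<zeta> = \<zeta>" by blast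
  then show ?thesis by (intro exI[of _ \<zeta>]) (auto simp: T_def dist_norm norm_minus_commute)
qed

lemma ray_close:
  fixes u :: complex and y d :: real
  assumes y: "y > 0" and d: "cmod (u / (\<i> * complex_of_real y) - 1) \<le> d"
  shows "cmod (u - \<i> * complex_of_real y) \<le> d * y" "Im u \<ge> y - d * y" "\<bar>Re u\<bar> \<le> d * y"
proof -
  have ne: "\<i> * complex_of_real y \<noteq> 0" using y by simp
  have "u - \<i> * complex_of_real y = (\<i> * complex_of_real y) * (u / (\<i> * complex_of_real y) - 1)"
    using ne by (simp add: field_simps)
  then have "cmod (u - \<i> * complex_of_real y) = y * cmod (u / (\<i> * complex_of_real y) - 1)"
    using y by (simp add: norm_mult)
  also have "\<dots> \<le> y * d" using d y by (intro mult_left_mono) auto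
  finally show 1: "cmod (u - \<i> * complex_of_real y) \<le> d * y" by (simp add: mult.commute)
  have "\<bar>Im (u - \<i> * complex_of_real y)\<bar> \<le> cmod (u - \<i> * complex_of_real y)" by (rule abs_Im_le_cmod)
  then show "Im u \<ge> y - d * y" using 1 by simp
  have "\<bar>Re (u - \<i> * complex_of_real y)\<bar> \<le> cmod (u - \<i> * complex_of_real y)" by (rule abs_Re_le_cmod)
  then show "\<bar>Re u\<bar> \<le> d * y" using 1 by simp
qed

lemma ray_eventually:
  fixes g :: "complex \<Rightarrow> complex"
  assumes "((\<lambda>y. g (\<i> * complex_of_real y) / (\<i> * complex_of_real y)) \<longlongrightarrow> 1) at_top" and "d > 0"
  shows "\<exists>Y. \<forall>y\<ge>Y. cmod (g (\<i> * complex_of_real y) / (\<i> * complex_of_real y) - 1) < d"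
proof -
  have "\<forall>\<^sub>F y in at_top. dist (g (\<i> * complex_of_real y) / (\<i> * complex_of_real y)) 1 < d"
    by (rule tendstoD[OF assms])
  then show ?thesis by (auto simp: eventually_at_top_linorder dist_norm)
qed

lemma ray_ident:
  fixes f g :: "complex \<Rightarrow> complex"
  assumes hf: "f holomorphic_on V" and hg: "g holomorphic_on V" and oV: "open V" and cV: "convex V"
    and ray: "\<And>y. y \<ge> Y \<Longrightarrow> \<i> * complex_of_real y \<in> V \<and> f (\<i> * complex_of_real y) = g (\<i> * complex_of_real y)"
    and w: "w \<in> V"
  shows "f w = g w"
proof -
  define Y' where "Y' = max Y 0"
  define R where "R = (\<lambda>y. \<i> * complex_of_real y) ` {Y'<..}"
  define \<xi> where "\<xi> = \<i> * complex_of_real Y'"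
  have "(\<lambda>z. f z - g z) w = 0"
  proof (rule analytic_continuation[of "\<lambda>z. f z - g z" V R \<xi> w])
    show "(\<lambda>z. f z - g z) holomorphic_on V" by (intro holomorphic_intros hf hg)
    show "open V" by fact
    show "connected V" using cV by (rule convex_connected)
    show "R \<subseteq> V" using ray by (auto simp: R_def Y'_def)
    show "\<xi> \<in> V" using ray by (auto simp: \<xi>_def Y'_def)
    show "\<xi> islimpt R"
    proof (rule islimpt_approachable[THEN iffD2], intro allI impI)
      fix e :: real assume e: "e > 0"
      show "\<exists>x'\<in>R. x' \<noteq> \<xi> \<and> dist x' \<xi> < e"
      proof (intro bexI[of _ "\<i> * complex_of_real (Y' + e/2)"] conjI)
        show "\<i> * complex_of_real (Y' + e/2) \<noteq> \<xi>" using e by (simp add: \<xi>_def)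
        have "\<i> * complex_of_real (Y' + e/2) - \<xi> = \<i> * complex_of_real (e/2)"
          by (simp add: \<xi>_def algebra_simps)
        then show "dist (\<i> * complex_of_real (Y' + e/2)) \<xi> < e" unfolding dist_norm
          using e by (simp only:) (simp add: norm_mult)
        show "\<i> * complex_of_real (Y' + e/2) \<in> R" unfolding R_def
          by (rule imageI) (use e in simp)
      qed
    qed
    show "\<And>z. z \<in> R \<Longrightarrow> f z - g z = 0" using ray by (auto simp: R_def Y'_def)
    show "w \<in> V" by fact
  qed
  then show ?thesis by simp
qed

lemma upper_half_Im: "z \<in> upper_half \<longleftrightarrow> Im z > 0" by (simp add: upper_half_def)

context mv begin

abbreviation "H16 \<equiv> {z. Im z > (16::real)}"
abbreviation "H18 \<equiv> {z. Im z > (18::real)}"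

lemma F_bd2: "Im z > 2 \<Longrightarrow> cmod (F_transform \<mu> z - z) \<le> 2 / Im z"
  using F_bound(2) by auto

lemma F_inj: "inj_on (F_transform \<mu>) H16"
proof (rule inj_onI)
  fix z1 z2 assume z1: "z1 \<in> H16" and z2: "z2 \<in> H16" and eq: "F_transform \<mu> z1 = F_transform \<mu> z2"
  have "cmod ((F_transform \<mu> z1 - z1) - (F_transform \<mu> z2 - z2)) \<le> cmod (z1 - z2) / 2"
    by (rule gen_lip[OF F_holo _ _ F_bd2]) (use z1 z2 in auto)
  then have "cmod (z1 - z2) \<le> cmod (z1 - z2) / 2" using eq by (simp add: norm_minus_commute)
  then show "z1 = z2" by simp
qed

definition hmu where
  "hmu = (SOME g. g holomorphic_on (F_transform \<mu> ` H16) \<and> (\<forall>z\<in>H16. g (F_transform \<mu> z) = z))"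

lemma hmu_props: "hmu holomorphic_on (F_transform \<mu> ` H16)" "\<And>z. z \<in> H16 \<Longrightarrow> hmu (F_transform \<mu> z) = z"
proof -
  obtain g where "g holomorphic_on (F_transform \<mu> ` H16)" "\<And>z. z \<in> H16 \<Longrightarrow> g (F_transform \<mu> z) = z"
  proof -
    have "F_transform \<mu> holomorphic_on H16" by (rule holomorphic_on_subset[OF F_holo]) auto
    from holomorphic_has_inverse[OF this open_halfspace_Im_gt F_inj] that show thesis by auto
  qed
  then have "\<exists>g. g holomorphic_on (F_transform \<mu> ` H16) \<and> (\<forall>z\<in>H16. g (F_transform \<mu> z) = z)" by blast
  from someI_ex[OF this] show "hmu holomorphic_on (F_transform \<mu> ` H16)" "\<And>z. z \<in> H16 \<Longrightarrow> hmu (F_transform \<mu> z) = z"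
    unfolding hmu_def by auto
qed

lemma hmu_pt:
  assumes v: "Im v > 18"
  shows "v \<in> F_transform \<mu> ` H16" "Im (hmu v) > 16" "F_transform \<mu> (hmu v) = v" "cmod (hmu v - v) \<le> 1"
    "cmod (hmu v - v) \<le> 2 / Im (hmu v)" "Im (hmu v) \<ge> Im v - 1"
proof -
  obtain \<zeta> where z: "cmod (\<zeta> - v) \<le> 1" "F_transform \<mu> \<zeta> = v"
    using gen_ex[OF F_holo _ _ F_bd2, of v] v by auto
  have "\<bar>Im (\<zeta> - v)\<bar> \<le> cmod (\<zeta> - v)" by (rule abs_Im_le_cmod)
  then have zi: "Im \<zeta> \<ge> Im v - 1" using z by simp
  then have zH: "\<zeta> \<in> H16" using v by simp
  show "v \<in> F_transform \<mu> ` H16" using zH z by blast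
  have hz: "hmu v = \<zeta>" using hmu_props(2)[OF zH] z by simp
  show "Im (hmu v) > 16" "F_transform \<mu> (hmu v) = v" "cmod (hmu v - v) \<le> 1" "Im (hmu v) \<ge> Im v - 1"
    using hz z zH zi by auto
  have "cmod (F_transform \<mu> \<zeta> - \<zeta>) \<le> 2 / Im \<zeta>" using zH by (intro F_bd2) auto
  then show "cmod (hmu v - v) \<le> 2 / Im (hmu v)" using hz z by (simp add: norm_minus_commute)
qed

lemma hmu_holo: "hmu holomorphic_on H18"
  by (rule holomorphic_on_subset[OF hmu_props(1)]) (use hmu_pt(1) in auto)

lemma H18_admissible: "admissible_dom H18"
  unfolding admissible_dom_def upper_half_def
  by (auto simp: open_halfspace_Im_gt convex_halfspace_Im_gt intro!: exI[of _ 19])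

lemma hmu_branch: "right_inverse_branch \<mu> H18 hmu"
  unfolding right_inverse_branch_def
proof (intro conjI H18_admissible hmu_holo ballI)
  show "hmu ` H18 \<subseteq> upper_half" using hmu_pt(2) by (force simp: upper_half_def)
  show "F_transform \<mu> (hmu w) = w" if "w \<in> H18" for w using hmu_pt(3) that by auto
  show "((\<lambda>y. hmu (\<i> * complex_of_real y) / (\<i> * complex_of_real y)) \<longlongrightarrow> 1) at_top"
  proof (rule Lim_null_comparison[where g="\<lambda>y. 1 / y", THEN LIM_zero_cancel])
    show "\<forall>\<^sub>F y in at_top. cmod (hmu (\<i> * complex_of_real y) / (\<i> * complex_of_real y) - 1) \<le> 1 / y"
      unfolding eventually_at_top_linorder
    proof (intro exI[of _ 19] allI impI)
      fix y :: real assume y: "y \<ge> 19"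
      have ne: "\<i> * complex_of_real y \<noteq> 0" using y by simp
      have "hmu (\<i> * complex_of_real y) / (\<i> * complex_of_real y) - 1
          = (hmu (\<i> * complex_of_real y) - \<i> * complex_of_real y) / (\<i> * complex_of_real y)"
        using ne by (simp add: field_simps)
      also have "cmod \<dots> \<le> 1 / y" using hmu_pt(4)[of "\<i> * complex_of_real y"] y
        by (simp add: norm_divide norm_mult divide_right_mono)
      finally show "cmod (hmu (\<i> * complex_of_real y) / (\<i> * complex_of_real y) - 1) \<le> 1 / y" .
    qed
    show "((\<lambda>y::real. 1 / y) \<longlongrightarrow> 0) at_top" by real_asymp
  qed
qed

lemma H18_phi_dom: "H18 \<subseteq> phi_dom \<mu>"
  using hmu_branch unfolding phi_dom_def by blast

lemma branch_unique:
  assumes br: "right_inverse_branch \<mu> U g" and w: "w \<in> U" and wi: "Im w > 18"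
  shows "g w = hmu w"
proof -
  from br have adm: "admissible_dom U" and hg: "g holomorphic_on U" and gU: "g ` U \<subseteq> upper_half"
    and Fg: "\<And>w. w \<in> U \<Longrightarrow> F_transform \<mu> (g w) = w"
    and lim: "((\<lambda>y. g (\<i> * complex_of_real y) / (\<i> * complex_of_real y)) \<longlongrightarrow> 1) at_top"
    unfolding right_inverse_branch_def by auto
  from adm obtain y0 where oU: "open U" and cU: "convex U" and ray: "\<And>y. y \<ge> y0 \<Longrightarrow> \<i> * complex_of_real y \<in> U"
    unfolding admissible_dom_def by auto
  obtain Y where Y: "\<And>y. y \<ge> Y \<Longrightarrow> cmod (g (\<i> * complex_of_real y) / (\<i> * complex_of_real y) - 1) < 1/2"
    using ray_eventually[OF lim, of "1/2"] by auto
  define Y' where "Y' = max (max Y y0) 40"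
  show ?thesis
  proof (rule ray_ident[where V="U \<inter> H18" and Y=Y' and f=g and g=hmu])
    show "g holomorphic_on U \<inter> H18" using hg by (rule holomorphic_on_subset) auto
    show "hmu holomorphic_on U \<inter> H18" using hmu_holo by (rule holomorphic_on_subset) auto
    show "open (U \<inter> H18)" using oU by (intro open_Int open_halfspace_Im_gt)
    show "convex (U \<inter> H18)" using cU by (intro convex_Int convex_halfspace_Im_gt)
    show "w \<in> U \<inter> H18" using w wi by auto
    fix y assume y: "y \<ge> Y'"
    have yU: "\<i> * complex_of_real y \<in> U" using ray y by (auto simp: Y'_def)
    have yH: "Im (\<i> * complex_of_real y) > 18" using y by (simp add: Y'_def)
    show "\<i> * complex_of_real y \<in> U \<inter> H18 \<and> g (\<i> * complex_of_real y) = hmu (\<i> * complex_of_real y)"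
    proof
      show "\<i> * complex_of_real y \<in> U \<inter> H18" using yU yH by auto
      have "Im (g (\<i> * complex_of_real y)) \<ge> y - 1/2 * y"
        using ray_close(2)[of y "g (\<i> * complex_of_real y)" "1/2"] Y[of y] y by (auto simp: Y'_def)
      then have g16: "g (\<i> * complex_of_real y) \<in> H16" using y by (simp add: Y'_def)
      have "F_transform \<mu> (g (\<i> * complex_of_real y)) = F_transform \<mu> (hmu (\<i> * complex_of_real y))"
        using Fg[OF yU] hmu_pt(3)[OF yH] by simp
      then show "g (\<i> * complex_of_real y) = hmu (\<i> * complex_of_real y)"
        using F_inj g16 hmu_pt(2)[OF yH] by (auto dest: inj_onD)
    qed
  qed
qed

lemma voic_mu:
  assumes "Im w > 18"
  shows "voiculescu \<mu> w = hmu w - w"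
proof -
  have ex: "\<exists>c. \<exists>U h. right_inverse_branch \<mu> U h \<and> w \<in> U \<and> c = h w - w"
    using hmu_branch assms by auto
  from someI_ex[OF ex] obtain U h where "right_inverse_branch \<mu> U h" "w \<in> U" "voiculescu \<mu> w = h w - w"
    unfolding voiculescu_def by blast
  then show ?thesis using branch_unique assms by auto
qed

end

lemma voic_some:
  assumes "w \<in> phi_dom \<nu>"
  shows "\<exists>U g. right_inverse_branch \<nu> U g \<and> w \<in> U \<and> voiculescu \<nu> w = g w - w"
proof -
  have ex: "\<exists>c. \<exists>U h. right_inverse_branch \<nu> U h \<and> w \<in> U \<and> c = h w - w"
    using assms unfolding phi_dom_def by blast
  from someI_ex[OF ex] show ?thesis unfolding voiculescu_def by blast
qed

lemma trunc_Im:
  assumes "w \<in> trunc_cone a b" "a > 0"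
  shows "Im w > b * a / (1 + a)"
proof -
  have w: "Im w > 0" "Im w > a * \<bar>Re w\<bar>" "cmod w > b" using assms(1) by (auto simp: trunc_cone_def)
  have "cmod w \<le> \<bar>Re w\<bar> + \<bar>Im w\<bar>" by (rule cmod_le)
  also have "\<dots> \<le> Im w / a + Im w" using w assms(2) by (simp add: field_simps)
  finally have "b < Im w / a + Im w" using w by linarith
  then have "b * a < Im w * (1 + a)" using assms(2) by (simp add: field_simps)
  then show ?thesis using assms(2) by (simp add: field_simps)
qed

lemma trunc_mono:
  assumes "a \<le> a'" "b \<le> b'" "a \<ge> 0"
  shows "trunc_cone a' b' \<subseteq> trunc_cone a b"
proof
  fix x assume "x \<in> trunc_cone a' b'"
  then have x: "Im x > 0" "a' * \<bar>Re x\<bar> < Im x" "b' < cmod x" by (auto simp: trunc_cone_def)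
  have "a * \<bar>Re x\<bar> \<le> a' * \<bar>Re x\<bar>" using assms by (intro mult_right_mono) auto
  then show "x \<in> trunc_cone a b" using x assms by (auto simp: trunc_cone_def)
qed

lemma free_powers_sets:
  assumes "free_powers \<mu> P" "sets \<mu> = sets borel" "n \<ge> 1"
  shows "sets (P n) = sets borel"
proof (cases n)
  case 0 then show ?thesis using assms by simp
next
  case (Suc k)
  show ?thesis
  proof (cases k)
    case 0 then show ?thesis using assms Suc by (simp add: free_powers_def)
  next
    case (Suc j)
    then have "is_free_conv (P k) \<mu> (P (Suc k))" using assms(1) by (simp add: free_powers_def)
    then show ?thesis using \<open>n = Suc k\<close> by (simp add: is_free_conv_def borel_prob_def)
  qed
qed

lemma G_scale:
  assumes "sets M = sets borel" "s > 0"
  shows "cauchy_transform (distr M borel (\<lambda>x. x / s)) z = complex_of_real s * cauchy_transform M (complex_of_real s * z)"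
proof -
  have T: "(\<lambda>x. x / s) \<in> measurable M borel" by (subst measurable_cong_sets[OF assms(1) refl]) measurable
  have "cauchy_transform (distr M borel (\<lambda>x. x / s)) z = (\<integral>x. 1 / (z - complex_of_real (x / s)) \<partial>M)"
    unfolding cauchy_transform_def by (rule integral_distr[OF T]) measurable
  also have "\<dots> = (\<integral>x. complex_of_real s * (1 / (complex_of_real s * z - complex_of_real x)) \<partial>M)"
  proof (intro Bochner_Integration.integral_cong refl)
    fix x
    have s0: "complex_of_real s \<noteq> 0" using assms by simp
    have e: "z - complex_of_real (x / s) = (complex_of_real s * z - complex_of_real x) / complex_of_real s"
      using s0 by (simp add: field_simps)
    show "1 / (z - complex_of_real (x / s)) = complex_of_real s * (1 / (complex_of_real s * z - complex_of_real x))"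
      unfolding e using s0 by (simp add: field_simps)
  qed
  also have "\<dots> = complex_of_real s * cauchy_transform M (complex_of_real s * z)"
    unfolding cauchy_transform_def by (rule integral_mult_right_zero)
  finally show ?thesis .
qed

lemma F_scale:
  assumes "sets M = sets borel" "s > 0"
  shows "F_transform (distr M borel (\<lambda>x. x / s)) z = F_transform M (complex_of_real s * z) / complex_of_real s"
  unfolding F_transform_def G_scale[OF assms] by simp

context mv begin

lemma powers_cone:
  assumes fp: "free_powers \<mu> P" and n: "n \<ge> 1"
  shows "\<exists>a b. a > 0 \<and> b > 0 \<and> (\<forall>w\<in>trunc_cone a b. w \<in> phi_dom (P n) \<and> voiculescu (P n) w = of_nat n * voiculescu \<mu> w)"
  using n
proof (induction n rule: dec_induct)
  case base
  have "\<forall>w\<in>trunc_cone 1 36. w \<in> phi_dom (P 1) \<and> voiculescu (P 1) w = of_nat 1 * voiculescu \<mu> w"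
  proof
    fix w assume "w \<in> trunc_cone 1 36"
    then have "Im w > 18" using trunc_Im[of w 1 36] by simp
    then show "w \<in> phi_dom (P 1) \<and> voiculescu (P 1) w = of_nat 1 * voiculescu \<mu> w"
      using H18_phi_dom fp by (auto simp: free_powers_def)
  qed
  then show ?case by (intro exI[of _ 1] exI[of _ 36]) auto
next
  case (step k)
  from step.IH obtain a b where ab: "a > 0" "b > 0"
    "\<And>w. w \<in> trunc_cone a b \<Longrightarrow> w \<in> phi_dom (P k) \<and> voiculescu (P k) w = of_nat k * voiculescu \<mu> w" by blast
  have "is_free_conv (P k) \<mu> (P (Suc k))" using fp step.hyps by (simp add: free_powers_def)
  then obtain a' b' where ab': "a' > 0" "b' > 0"
    "trunc_cone a' b' \<subseteq> phi_dom (P k) \<inter> phi_dom \<mu> \<inter> phi_dom (P (Suc k))"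
    "\<And>z. z \<in> trunc_cone a' b' \<Longrightarrow> voiculescu (P (Suc k)) z = voiculescu (P k) z + voiculescu \<mu> z"
    unfolding is_free_conv_def by blast
  define A where "A = max a a'"
  define B where "B = max b b'"
  have s1: "trunc_cone A B \<subseteq> trunc_cone a b" "trunc_cone A B \<subseteq> trunc_cone a' b'"
    by (rule trunc_mono; use ab ab' in \<open>simp add: A_def B_def\<close>)+
  have "\<forall>w\<in>trunc_cone A B. w \<in> phi_dom (P (Suc k)) \<and> voiculescu (P (Suc k)) w = of_nat (Suc k) * voiculescu \<mu> w"
  proof
    fix w assume w: "w \<in> trunc_cone A B"
    then have "w \<in> trunc_cone a b" "w \<in> trunc_cone a' b'" using s1 by auto
    then show "w \<in> phi_dom (P (Suc k)) \<and> voiculescu (P (Suc k)) w = of_nat (Suc k) * voiculescu \<mu> w"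
      using ab(3) ab'(3,4) by (auto simp: algebra_simps)
  qed
  moreover have "A > 0" "B > 0" using ab ab' by (auto simp: A_def B_def)
  ultimately show ?case by blast
qed

end

context mv begin

lemma part2:
  assumes fp: "free_powers \<mu> P" and n: "n \<ge> 1"
    and zdom: "z \<in> phi_dom (normalized_power P n)"
    and zi: "Im (complex_of_real (sqrt (real n)) * z) > 18"
  shows "complex_of_real (sqrt (real n)) * voiculescu \<mu> (complex_of_real (sqrt (real n)) * z)
           = voiculescu (normalized_power P n) z"
proof -
  define s where "s = sqrt (real n)"
  define cs where "cs = complex_of_real s"
  have s1: "s \<ge> 1" using n by (simp add: s_def)
  have cs0: "cs \<noteq> 0" using s1 by (simp add: cs_def)
  have nss: "of_nat n = cs * cs" unfolding cs_def s_def
    by (simp flip: of_real_mult)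
  have setsP: "sets (P n) = sets borel" by (rule free_powers_sets[OF fp sb n])
  define \<mu>n where "\<mu>n = normalized_power P n"
  have Fsc: "F_transform \<mu>n \<zeta> = F_transform (P n) (cs * \<zeta>) / cs" for \<zeta>
    unfolding \<mu>n_def normalized_power_def cs_def s_def
    by (rule F_scale[OF setsP]) (use s1 s_def in auto)
  obtain a b where ab: "a > 0" "b > 0"
    "\<And>w. w \<in> trunc_cone a b \<Longrightarrow> w \<in> phi_dom (P n) \<and> voiculescu (P n) w = of_nat n * voiculescu \<mu> w"
    using powers_cone[OF fp n] by blast
  define K where "K = (\<lambda>w. w + of_nat n * (hmu w - w))"
  define Kn where "Kn = (\<lambda>\<zeta>. K (cs * \<zeta>) / cs)"
  have FK: "F_transform (P n) (K w) = w" if w: "w \<in> trunc_cone a b" "Im w > 18" for w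
  proof -
    have wd: "w \<in> phi_dom (P n)" and wv: "voiculescu (P n) w = of_nat n * voiculescu \<mu> w" using ab(3)[OF w(1)] by auto
    obtain U g where g: "right_inverse_branch (P n) U g" "w \<in> U" "voiculescu (P n) w = g w - w"
      using voic_some[OF wd] by blast
    have "F_transform (P n) (g w) = w" using g unfolding right_inverse_branch_def by auto
    moreover have "g w = K w" using g(3) wv voic_mu[OF w(2)] by (simp add: K_def algebra_simps)
    ultimately show ?thesis by simp
  qed
  have Kdiff: "Kn \<zeta> - \<zeta> = cs * (hmu (cs * \<zeta>) - cs * \<zeta>)" for \<zeta>
    unfolding Kn_def K_def nss using cs0 by (simp add: field_simps)
  have Imcs: "Im (cs * \<zeta>) = s * Im \<zeta>" "Re (cs * \<zeta>) = s * Re \<zeta>" "cmod (cs * \<zeta>) = s * cmod \<zeta>" for \<zeta>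
    using s1 by (auto simp: cs_def norm_mult)
  define c where "c = 18 / s"
  have c0: "c \<ge> 0" "c \<le> 18" using s1 by (auto simp: c_def divide_simps)
  have inH: "Im (cs * \<zeta>) > 18" if "Im \<zeta> > c" for \<zeta>
    using that s1 unfolding Imcs by (simp add: c_def field_simps)
  have holK: "Kn holomorphic_on {\<zeta>. Im \<zeta> > c}"
  proof -
    have "(hmu \<circ> (\<lambda>\<zeta>. cs * \<zeta>)) holomorphic_on {\<zeta>. Im \<zeta> > c}"
      by (rule holomorphic_on_compose_gen[OF _ hmu_holo]) (auto intro!: holomorphic_intros inH)
    then have "(\<lambda>\<zeta>. hmu (cs * \<zeta>)) holomorphic_on {\<zeta>. Im \<zeta> > c}" by (simp add: o_def)
    then show ?thesis unfolding Kn_def K_def using cs0 by (intro holomorphic_intros) auto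
  qed
  have bdK: "cmod (Kn \<zeta> - \<zeta>) \<le> 4 / Im \<zeta>" if "Im \<zeta> > c" for \<zeta>
  proof -
    define v where "v = cs * \<zeta>"
    have v: "Im v > 18" using inH[OF that] by (simp add: v_def)
    have iz: "Im \<zeta> > 0" using that c0 by linarith
    have "cmod (hmu v - v) \<le> 2 / Im (hmu v)" by (rule hmu_pt(5)[OF v])
    also have "\<dots> \<le> 2 / (Im v / 2)" using hmu_pt(6)[OF v] v by (intro divide_left_mono) auto
    also have "\<dots> = 4 / (s * Im \<zeta>)" unfolding v_def Imcs by simp
    finally have "cmod (hmu v - v) \<le> 4 / (s * Im \<zeta>)" .
    then have "s * cmod (hmu v - v) \<le> s * (4 / (s * Im \<zeta>))" using s1 by (intro mult_left_mono) auto
    also have "\<dots> = 4 / Im \<zeta>" using s1 by simp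
    finally show ?thesis unfolding Kdiff using s1 by (simp add: norm_mult cs_def v_def)
  qed
  obtain U' h' where h': "right_inverse_branch \<mu>n U' h'" "z \<in> U'" "voiculescu \<mu>n z = h' z - z"
    using voic_some[OF zdom[folded \<mu>n_def]] by blast
  from h'(1) have adm: "admissible_dom U'" and hh: "h' holomorphic_on U'"
    and Fh: "\<And>w. w \<in> U' \<Longrightarrow> F_transform \<mu>n (h' w) = w"
    and lim: "((\<lambda>y. h' (\<i> * complex_of_real y) / (\<i> * complex_of_real y)) \<longlongrightarrow> 1) at_top"
    unfolding right_inverse_branch_def by auto
  from adm obtain y0 where oU: "open U'" and cU: "convex U'" and ray: "\<And>y. y \<ge> y0 \<Longrightarrow> \<i> * complex_of_real y \<in> U'"
    unfolding admissible_dom_def by auto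
  define d where "d = 1 / (4 * (1 + a))"
  have d0: "d > 0" "d \<le> 1/4" "d * (1 + a) = 1/4" using ab by (auto simp: d_def field_simps)
  obtain Y where Y: "\<And>y. y \<ge> Y \<Longrightarrow> cmod (h' (\<i> * complex_of_real y) / (\<i> * complex_of_real y) - 1) < d"
    using ray_eventually[OF lim d0(1)] by auto
  define Y' where "Y' = max (max Y y0) (4 * (1 + a) + 4 * b + 100)"
  have eq: "h' z = Kn z"
  proof (rule ray_ident[where V="U' \<inter> {\<zeta>. Im \<zeta> > c}" and Y=Y' and f=h' and g=Kn])
    show "h' holomorphic_on U' \<inter> {\<zeta>. Im \<zeta> > c}" using hh by (rule holomorphic_on_subset) auto
    show "Kn holomorphic_on U' \<inter> {\<zeta>. Im \<zeta> > c}" using holK by (rule holomorphic_on_subset) auto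
    show "open (U' \<inter> {\<zeta>. Im \<zeta> > c})" using oU by (intro open_Int open_halfspace_Im_gt)
    show "convex (U' \<inter> {\<zeta>. Im \<zeta> > c})" using cU by (intro convex_Int convex_halfspace_Im_gt)
    have "Im z > c" using zi s1 unfolding s_def[symmetric] by (simp add: c_def field_simps)
    then show "z \<in> U' \<inter> {\<zeta>. Im \<zeta> > c}" using h'(2) by auto
    fix y assume y: "y \<ge> Y'"
    define iy where "iy = \<i> * complex_of_real y"
    have yU: "iy \<in> U'" using ray y by (auto simp: Y'_def iy_def)
    have yc: "Im iy > c" using y c0 ab by (simp add: Y'_def iy_def)
    have y0': "y > 0" using y ab by (simp add: Y'_def)
    define v where "v = h' iy"
    have dv: "cmod (v / iy - 1) \<le> d" using Y[of y] y by (simp add: Y'_def v_def iy_def)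
    have vI: "Im v \<ge> y - d * y" and vR: "\<bar>Re v\<bar> \<le> d * y"
      using ray_close[OF y0' dv[unfolded iy_def]] by (auto simp: iy_def)
    have "d * y \<le> y / 4" using d0 y0' by (simp add: mult_right_mono)
    then have vI': "Im v \<ge> 3 / 4 * y" using vI by linarith
    have "Im v > 2 * c + 4 * 4 + 5" using vI' y c0 ab by (simp add: Y'_def)
    then obtain \<zeta> where \<zeta>: "cmod (\<zeta> - v) \<le> 1" "Kn \<zeta> = v"
      using gen_ex[OF holK c0(1) _ bdK, of v] by auto
    have "\<bar>Im (\<zeta> - v)\<bar> \<le> 1" "\<bar>Re (\<zeta> - v)\<bar> \<le> 1"
      using \<zeta>(1) abs_Im_le_cmod[of "\<zeta> - v"] abs_Re_le_cmod[of "\<zeta> - v"] by linarith+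
    then have zI: "Im \<zeta> \<ge> Im v - 1" and zR: "\<bar>Re \<zeta>\<bar> \<le> \<bar>Re v\<bar> + 1" by auto
    have aR: "a * \<bar>Re \<zeta>\<bar> \<le> a * (d * y + 1)" using zR vR ab by (intro mult_left_mono) auto
    have "a * (d * y + 1) + (d * y + 1) = (d * (1 + a)) * y + (1 + a)" by (simp add: algebra_simps)
    also have "\<dots> = y / 4 + (1 + a)" by (simp only: d0(3))
    finally have key: "a * (d * y + 1) = y / 4 + (1 + a) - (d * y + 1)" by linarith
    have zcone1: "Im \<zeta> > a * \<bar>Re \<zeta>\<bar>"
    proof -
      have "a * \<bar>Re \<zeta>\<bar> \<le> y / 4 + (1 + a) - (d * y + 1)" using aR key by linarith
      moreover have "Im \<zeta> \<ge> y - d * y - 1" using zI vI by linarith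
      moreover have "y / 2 > 1 + a" using y ab by (simp add: Y'_def)
      ultimately show ?thesis using y0' by linarith
    qed
    have zIb: "Im \<zeta> > b" "Im \<zeta> > 18" using zI vI' y ab by (auto simp: Y'_def)
    have csz: "cs * \<zeta> \<in> trunc_cone a b"
    proof -
      have "Im \<zeta> \<le> cmod \<zeta>" using abs_Im_le_cmod[of \<zeta>] by linarith
      then have "cmod (cs * \<zeta>) > b" using zIb s1 unfolding Imcs by (smt (verit) mult_le_cancel_right1)
      moreover have "Im (cs * \<zeta>) > a * \<bar>Re (cs * \<zeta>)\<bar>" using zcone1 s1 unfolding Imcs by (simp add: abs_mult)
      moreover have "Im (cs * \<zeta>) > 0" using zIb s1 unfolding Imcs by simp
      ultimately show ?thesis by (simp add: trunc_cone_def)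
    qed
    have csI: "Im (cs * \<zeta>) > 18" using zIb s1 unfolding Imcs by (smt (verit) mult_le_cancel_right1)
    have "F_transform \<mu>n (Kn \<zeta>) = \<zeta>"
      unfolding Fsc Kn_def using FK[OF csz csI] cs0 by simp
    moreover have "F_transform \<mu>n v = iy" using Fh[OF yU] by (simp add: v_def)
    ultimately have "\<zeta> = iy" using \<zeta>(2) by simp
    then show "\<i> * complex_of_real y \<in> U' \<inter> {\<zeta>. Im \<zeta> > c} \<and> h' (\<i> * complex_of_real y) = Kn (\<i> * complex_of_real y)"
      using yU yc \<zeta>(2) by (simp add: iy_def v_def)
  qed
  have zI18: "Im (cs * z) > 18" using zi by (simp add: cs_def s_def)
  have "voiculescu \<mu>n z = cs * (hmu (cs * z) - cs * z)" using h'(3) eq Kdiff by simp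
  also have "\<dots> = cs * voiculescu \<mu> (cs * z)" using voic_mu[OF zI18] by simp
  finally show ?thesis by (simp add: \<mu>n_def cs_def s_def)
qed

end

lemma ratio_bound:
  fixes z :: complex and t k :: real
  assumes k: "0 < k" "k \<le> 1" and z: "Im z \<ge> k * cmod z" "z \<noteq> 0"
  shows "\<bar>t\<bar> / cmod (z - complex_of_real t) \<le> (2 / k) * min 1 (\<bar>t\<bar> / cmod z)"
proof -
  have zn: "cmod z > 0" using z by simp
  have "Im z \<le> cmod (z - complex_of_real t)" using abs_Im_le_cmod[of "z - complex_of_real t"] by simp
  then have d1: "cmod (z - complex_of_real t) \<ge> k * cmod z" using z by linarith
  have kz: "k * cmod z > 0" using k zn by simp
  have r1: "\<bar>t\<bar> / cmod (z - complex_of_real t) \<le> \<bar>t\<bar> / (k * cmod z)"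
  proof (rule divide_left_mono)
    show "0 < cmod (z - complex_of_real t) * (k * cmod z)" using d1 kz by (intro mult_pos_pos) (auto simp: zn k)
  qed (use d1 in auto)
  also have "\<dots> = (1 / k) * (\<bar>t\<bar> / cmod z)" by simp
  finally have A0: "\<bar>t\<bar> / cmod (z - complex_of_real t) \<le> (1 / k) * (\<bar>t\<bar> / cmod z)" .
  also have "\<dots> \<le> (2 / k) * (\<bar>t\<bar> / cmod z)" using k zn by (intro mult_right_mono) (auto simp: divide_simps)
  finally have A: "\<bar>t\<bar> / cmod (z - complex_of_real t) \<le> (2 / k) * (\<bar>t\<bar> / cmod z)" .
  have B: "\<bar>t\<bar> / cmod (z - complex_of_real t) \<le> 2 / k"
  proof (cases "\<bar>t\<bar> \<ge> 2 * cmod z")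
    case True
    have "cmod (complex_of_real t) - cmod z \<le> cmod (z - complex_of_real t)"
      using norm_triangle_ineq2[of "complex_of_real t" z] by (simp add: norm_minus_commute)
    then have "cmod (z - complex_of_real t) \<ge> \<bar>t\<bar> / 2" using True by simp
    moreover have "\<bar>t\<bar> > 0" using True zn by linarith
    ultimately have "\<bar>t\<bar> / cmod (z - complex_of_real t) \<le> \<bar>t\<bar> / (\<bar>t\<bar> / 2)"
    proof (intro divide_left_mono)
      assume "\<bar>t\<bar> / 2 \<le> cmod (z - complex_of_real t)" "\<bar>t\<bar> > 0"
      then show "0 < cmod (z - complex_of_real t) * (\<bar>t\<bar> / 2)" by (intro mult_pos_pos) auto
    qed auto
    also have "\<dots> = 2" using \<open>\<bar>t\<bar> > 0\<close> by simp
    also have "\<dots> \<le> 2 / k" using k by (simp add: divide_simps)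
    finally show ?thesis .
  next
    case False
    have "(1 / k) * (\<bar>t\<bar> / cmod z) \<le> (1 / k) * 2"
      using False zn k by (intro mult_left_mono) (auto simp: divide_simps)
    then show ?thesis using A0 by simp
  qed
  show ?thesis
  proof (cases "1 \<le> \<bar>t\<bar> / cmod z")
    case True then have "min 1 (\<bar>t\<bar> / cmod z) = 1" by simp
    then show ?thesis using B by (simp only:)
  next
    case False then have "min 1 (\<bar>t\<bar> / cmod z) = \<bar>t\<bar> / cmod z" by simp
    then show ?thesis using A by (simp only:)
  qed
qed

context mv begin

interpretation P: prob_space \<mu> by (rule ps)

definition psi where "psi r = (\<integral>t. t^2 * min 1 (\<bar>t\<bar> / r) \<partial>\<mu>)"
definition Rf where "Rf z = (\<integral>t. complex_of_real (t^3) / (z - complex_of_real t) \<partial>\<mu>)"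

lemma psi_int: "r > 0 \<Longrightarrow> integrable \<mu> (\<lambda>t. t^2 * min 1 (\<bar>t\<bar> / r))"
proof (rule Bochner_Integration.integrable_bound[OF i2])
  show "(\<lambda>t. t^2 * min 1 (\<bar>t\<bar> / r)) \<in> borel_measurable \<mu>" by (intro meas) measurable
  assume "r > 0"
  show "AE x in \<mu>. norm (x^2 * min 1 (\<bar>x\<bar> / r)) \<le> norm (x^2)"
  proof (intro AE_I2)
    fix x :: real
    have "x^2 * min 1 (\<bar>x\<bar> / r) \<le> x^2" by (intro mult_left_le) auto
    moreover have "0 \<le> x^2 * min 1 (\<bar>x\<bar> / r)" using \<open>r > 0\<close> by auto
    ultimately show "norm (x^2 * min 1 (\<bar>x\<bar> / r)) \<le> norm (x^2)" by simp
  qed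
qed

lemma psi_lim: "(psi \<longlongrightarrow> 0) at_top"
proof -
  have "((\<lambda>r. \<integral>t. t^2 * min 1 (\<bar>t\<bar> / r) \<partial>\<mu>) \<longlongrightarrow> (\<integral>t. 0 \<partial>\<mu>)) at_top"
  proof (rule integral_dominated_convergence_at_top[where w="\<lambda>t. t^2"])
    show "(\<lambda>t. 0::real) \<in> borel_measurable \<mu>" by simp
    show "(\<lambda>t. t^2 * min 1 (\<bar>t\<bar> / r)) \<in> borel_measurable \<mu>" for r by (intro meas) measurable
    show "integrable \<mu> (\<lambda>t. t^2)" by (rule i2)
    show "AE t in \<mu>. ((\<lambda>r. t^2 * min 1 (\<bar>t\<bar> / r)) \<longlongrightarrow> 0) at_top"
    proof (intro AE_I2)
      fix t :: real
      have "((\<lambda>r. \<bar>t\<bar> / r) \<longlongrightarrow> 0) at_top" by real_asymp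
      then have "((\<lambda>r. min 1 (\<bar>t\<bar> / r)) \<longlongrightarrow> min 1 0) at_top" by (intro tendsto_min tendsto_const)
      then have "((\<lambda>r. t^2 * min 1 (\<bar>t\<bar> / r)) \<longlongrightarrow> t^2 * min 1 0) at_top" by (intro tendsto_mult tendsto_const)
      then show "((\<lambda>r. t^2 * min 1 (\<bar>t\<bar> / r)) \<longlongrightarrow> 0) at_top" by simp
    qed
    show "\<forall>\<^sub>F r in at_top. AE t in \<mu>. norm (t^2 * min 1 (\<bar>t\<bar> / r)) \<le> t^2"
      unfolding eventually_at_top_linorder
      by (intro exI[of _ 1] allI impI AE_I2) (auto simp: abs_mult intro!: mult_left_le)
  qed
  then show ?thesis by (simp add: psi_def[abs_def])
qed

lemma Rf_facts:
  assumes k: "0 < k" "k \<le> 1" and z: "Im z \<ge> k * cmod z" "Im z > 0"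
  shows "cmod (Rf z) \<le> (2 / k) * psi (cmod z)" "Q z = 1 / z + Rf z / z"
proof -
  have z0: "z \<noteq> 0" using z by auto
  have zn: "cmod z > 0" using z0 by simp
  have pt: "cmod (complex_of_real (t^3) / (z - complex_of_real t)) = t^2 * (\<bar>t\<bar> / cmod (z - complex_of_real t))" for t
  proof -
    have "cmod (complex_of_real (t^3)) = \<bar>t^3\<bar>" by (rule norm_of_real)
    also have "\<dots> = t^2 * \<bar>t\<bar>" by (simp add: abs_mult power3_eq_cube power2_eq_square)
    finally show ?thesis by (simp only: norm_divide) simp
  qed
  have bd: "cmod (complex_of_real (t^3) / (z - complex_of_real t)) \<le> (2 / k) * (t^2 * min 1 (\<bar>t\<bar> / cmod z))" for t
  proof -
    have "t^2 * (\<bar>t\<bar> / cmod (z - complex_of_real t)) \<le> t^2 * ((2 / k) * min 1 (\<bar>t\<bar> / cmod z))"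
      by (rule mult_left_mono[OF ratio_bound[OF k z(1) z0]]) simp
    then show ?thesis unfolding pt by (simp only: mult.left_commute)
  qed
  have bd2: "cmod (complex_of_real (t^3) / (z - complex_of_real t)) \<le> (2 / k) * t^2" for t
  proof -
    have "(2 / k) * (t^2 * min 1 (\<bar>t\<bar> / cmod z)) \<le> (2 / k) * (t^2 * 1)"
      using k by (intro mult_left_mono) auto
    then show ?thesis using bd[of t] by simp
  qed
  have iR: "integrable \<mu> (\<lambda>t. complex_of_real (t^3) / (z - complex_of_real t))"
    by (rule int_bound_sq(1)[OF _ bd2]) (use k in \<open>auto\<close>)
  have "cmod (Rf z) \<le> (\<integral>t. cmod (complex_of_real (t^3) / (z - complex_of_real t)) \<partial>\<mu>)"
    unfolding Rf_def by (rule integral_norm_bound)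
  also have "\<dots> \<le> (\<integral>t. (2 / k) * (t^2 * min 1 (\<bar>t\<bar> / cmod z)) \<partial>\<mu>)"
    by (intro integral_mono iR integrable_norm bd integrable_mult_right psi_int zn)
  also have "\<dots> = (2 / k) * psi (cmod z)" by (simp add: psi_def)
  finally show "cmod (Rf z) \<le> (2 / k) * psi (cmod z)" .
  have nz: "z - complex_of_real t \<noteq> 0" for t using z by (auto simp: complex_eq_iff)
  have "Q z = (\<integral>t. complex_of_real (t^2) / z + complex_of_real (t^3) / (z - complex_of_real t) / z \<partial>\<mu>)"
    unfolding Q_def
  proof (intro Bochner_Integration.integral_cong refl)
    fix t
    show "complex_of_real (t^2) / (z - complex_of_real t) = complex_of_real (t^2) / z + complex_of_real (t^3) / (z - complex_of_real t) / z"
      using z0 nz[of t] by (simp add: field_simps power2_eq_square power3_eq_cube)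
  qed
  also have "\<dots> = (\<integral>t. complex_of_real (t^2) / z \<partial>\<mu>) + (\<integral>t. complex_of_real (t^3) / (z - complex_of_real t) / z \<partial>\<mu>)"
    by (intro Bochner_Integration.integral_add integrable_divide iR integrable_of_real[OF i2])
  also have "\<dots> = 1 / z + Rf z / z"
    using integral_complex_of_real[of \<mu> "\<lambda>t. t^2"] v1 integral_divide_zero[of \<mu> "\<lambda>t. complex_of_real (t^3) / (z - complex_of_real t)" z]
      integral_divide_zero[of \<mu> "\<lambda>t. complex_of_real (t^2)" z]
    by (simp add: Rf_def)
  finally show "Q z = 1 / z + Rf z / z" .
qed

end

context mv begin

lemma F_refined:
  assumes z2: "Im z \<ge> 2" and k: "0 < k" "k \<le> 1" and zk: "Im z \<ge> k * cmod z" and R1: "cmod (Rf z) \<le> 1"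
  shows "cmod (F_transform \<mu> z - z + 1 / z) \<le> 2 * (2 / cmod z ^ 2 + cmod (Rf z)) / cmod z"
proof -
  have z0: "Im z > 0" using z2 by simp
  have zn: "z \<noteq> 0" using z0 by auto
  have cz: "Im z \<le> cmod z" using abs_Im_le_cmod[of z] by simp
  have czp: "cmod z > 0" using zn by simp
  define q where "q = Q z / z"
  have kq: "z * cauchy_transform \<mu> z = 1 + q" using G_key[OF z0] by (simp add: q_def algebra_simps)
  have Qb: "cmod (Q z) \<le> 1 / Im z" by (rule Q_bound[OF z0])
  have "cmod q \<le> (1 / Im z) / Im z"
    unfolding q_def norm_divide using Qb cz z0 by (intro frac_le) auto
  also have "\<dots> \<le> 1/4" using z2 by (simp add: divide_simps) (metis mult_mono[of 2 "Im z" 2 "Im z"] order_trans[of 0 2] zero_le_numeral mult_2_right numeral_Bit0 order.refl numeral_times_numeral semiring_norm(12) z2)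
  finally have q4: "cmod q \<le> 1/4" .
  have "1 - cmod q \<le> cmod (1 + q)" using norm_triangle_ineq[of "1+q" "-q"] by simp
  then have q1: "cmod (1 + q) \<ge> 3/4" using q4 by linarith
  then have q0: "1 + q \<noteq> 0" by auto
  have Qe: "Q z = 1 / z + Rf z / z" using Rf_facts(2)[OF k zk z0] .
  have zq: "z * z * q = 1 + Rf z" unfolding q_def Qe using zn by (simp add: field_simps)
  have "cmod (z * z * q) \<le> 2" using R1 zq norm_triangle_ineq[of 1 "Rf z"] by simp
  then have qb: "cmod q \<le> 2 / cmod z ^ 2" using czp by (simp add: norm_mult divide_simps power2_eq_square mult.commute)
  have G: "cauchy_transform \<mu> z = (1 + q) / z" using kq zn by (simp add: field_simps)
  have "F_transform \<mu> z - z + 1 / z = (z * z - z * z * (1 + q) + (1 + q)) / (z * (1 + q))"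
    unfolding F_transform_def G using zn q0 by (simp add: field_simps)
  also have "\<dots> = (q - Rf z) / (z * (1 + q))"
  proof -
    have "z * z - z * z * (1 + q) + (1 + q) = 1 + q - z * z * q" by (simp add: algebra_simps)
    also have "\<dots> = q - Rf z" using zq by simp
    finally show ?thesis by simp
  qed
  finally have "cmod (F_transform \<mu> z - z + 1 / z) = cmod (q - Rf z) / (cmod z * cmod (1 + q))"
    by (simp add: norm_divide norm_mult)
  also have "\<dots> \<le> (2 / cmod z ^ 2 + cmod (Rf z)) / (cmod z * (3/4))"
  proof (rule frac_le)
    show "cmod (q - Rf z) \<le> 2 / cmod z ^ 2 + cmod (Rf z)" using qb norm_triangle_ineq4[of q "Rf z"] by linarith
    show "0 < cmod z * (3/4)" using czp by simp
    show "cmod z * (3/4) \<le> cmod z * cmod (1 + q)" using q1 czp by (intro mult_left_mono) auto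
  qed auto
  also have "\<dots> \<le> 2 * (2 / cmod z ^ 2 + cmod (Rf z)) / cmod z"
    using czp by (simp add: divide_simps)
  finally show ?thesis .
qed

lemma cone_Im:
  assumes "a > 0" "Im w > a * \<bar>Re w\<bar>"
  shows "Im w \<ge> (a / (1 + a)) * cmod w"
proof -
  have "cmod w \<le> \<bar>Re w\<bar> + \<bar>Im w\<bar>" by (rule cmod_le)
  also have "\<dots> \<le> Im w / a + Im w"
  proof -
    have "Im w > 0" using assms by (smt (verit) mult_nonneg_nonneg abs_ge_zero)
    moreover have "\<bar>Re w\<bar> \<le> Im w / a" using assms by (simp add: field_simps)
    ultimately show ?thesis by simp
  qed
  also have "\<dots> = Im w * ((1 + a) / a)" using assms by (simp add: field_simps)
  finally have "cmod w \<le> Im w * ((1 + a) / a)" .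
  then have "cmod w * (a / (1 + a)) \<le> Im w * ((1 + a) / a) * (a / (1 + a))"
    using assms by (intro mult_right_mono) auto
  also have "\<dots> = Im w * (((1 + a) / a) * (a / (1 + a)))" by (simp only: mult.assoc)
  also have "((1 + a) / a) * (a / (1 + a)) = 1" using assms by simp
  finally show ?thesis by (simp add: mult.commute)
qed

lemma hmu_asym:
  assumes a: "a > 0" and e: "e > 0"
  shows "\<exists>R. \<forall>w. Im w > a * \<bar>Re w\<bar> \<longrightarrow> cmod w > R \<longrightarrow> cmod (hmu w - w - 1 / w) \<le> e / cmod w"
proof -
  define k0 where "k0 = a / (1 + a)"
  define k where "k = k0 / 2"
  have k0: "0 < k0" "k0 \<le> 1" using a by (auto simp: k0_def)
  have k: "0 < k" "k \<le> 1" using k0 by (auto simp: k_def)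
  define \<eta> where "\<eta> = min (e / 16) 1"
  have \<eta>: "\<eta> > 0" "\<eta> \<le> e / 16" "\<eta> \<le> 1" using e by (auto simp: \<eta>_def)
  have "\<forall>\<^sub>F r in at_top. psi r < k * \<eta> / 2"
    by (rule order_tendstoD(2)[OF psi_lim]) (use k \<eta> in auto)
  then obtain r0 where r0: "\<And>r. r \<ge> r0 \<Longrightarrow> psi r < k * \<eta> / 2" by (auto simp: eventually_at_top_linorder)
  define R where "R = 18 / k0 + 2 / k0 + \<bar>r0\<bar> + 4 / e + 32 / e + 10"
  have Rge: "R \<ge> 18 / k0 + 2 / k0 + 10" "R \<ge> \<bar>r0\<bar> + 10" "R \<ge> 4 / e + 10" "R \<ge> 32 / e + 10"
  proof -
    have "0 \<le> 4/e" "0 \<le> 32/e" "0 \<le> 18/k0" "0 \<le> 2/k0" "0 \<le> \<bar>r0\<bar>" using e k0 by auto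
    then show "R \<ge> 18 / k0 + 2 / k0 + 10" "R \<ge> \<bar>r0\<bar> + 10" "R \<ge> 4 / e + 10" "R \<ge> 32 / e + 10"
      unfolding R_def by linarith+
  qed
  show ?thesis
  proof (intro exI[of _ R] allI impI)
    fix w assume wc: "Im w > a * \<bar>Re w\<bar>" and wR: "cmod w > R"
    have wk: "Im w \<ge> k0 * cmod w" using cone_Im[OF a wc] by (simp add: k0_def)
    have "k0 * cmod w \<ge> k0 * (18 / k0 + 2 / k0 + 10)" using wR Rge k0 by (intro mult_left_mono) auto
    then have kw: "k0 * cmod w \<ge> 20" using k0 by (simp add: algebra_simps)
    have w18: "Im w > 18" using wk kw by linarith
    define \<zeta> where "\<zeta> = hmu w"
    have F\<zeta>: "F_transform \<mu> \<zeta> = w" and d1: "cmod (\<zeta> - w) \<le> 1" and Iz: "Im \<zeta> \<ge> Im w - 1"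
      using hmu_pt[OF w18] by (auto simp: \<zeta>_def)
    have nz1: "cmod \<zeta> \<le> cmod w + 1" and nz2: "cmod \<zeta> \<ge> cmod w - 1"
      using d1 norm_triangle_ineq2[of \<zeta> w] norm_triangle_ineq3[of \<zeta> w] by (auto simp: norm_minus_commute)
    have "Im \<zeta> \<ge> k0 * cmod w - 1" using Iz wk by linarith
    moreover have "k0 * cmod w - 1 \<ge> k * (cmod w + 1)"
      using kw k0 by (simp add: k_def field_simps)
    moreover have "k * (cmod w + 1) \<ge> k * cmod \<zeta>" using nz1 k by (intro mult_left_mono) auto
    ultimately have zk: "Im \<zeta> \<ge> k * cmod \<zeta>" by linarith
    have z2: "Im \<zeta> \<ge> 2" using Iz w18 by linarith
    have w10: "cmod w \<ge> 10" using wR Rge(2) abs_ge_zero[of r0] by linarith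
    then have wpos: "cmod w > 0" "cmod w \<ge> 10" by auto
    have zbig: "cmod \<zeta> \<ge> cmod w / 2" using nz2 wpos by linarith
    have zpos: "cmod \<zeta> > 0" using zbig wpos by linarith
    have "cmod \<zeta> \<ge> r0" using nz2 wR Rge by linarith
    then have ps: "psi (cmod \<zeta>) < k * \<eta> / 2" by (rule r0)
    have Rfb: "cmod (Rf \<zeta>) \<le> \<eta>"
    proof -
      have "cmod (Rf \<zeta>) \<le> (2 / k) * psi (cmod \<zeta>)" using Rf_facts(1)[OF k zk] z2 by simp
      also have "\<dots> \<le> (2 / k) * (k * \<eta> / 2)" using ps k by (intro mult_left_mono) auto
      also have "\<dots> = \<eta>" using k by simp
      finally show ?thesis .
    qed
    have zsq: "2 / cmod \<zeta> ^ 2 \<le> e / 16"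
    proof -
      have "cmod \<zeta> \<ge> 32 / e + 9" using nz2 wR Rge by linarith
      then have z1: "cmod \<zeta> \<ge> 1" "cmod \<zeta> \<ge> 32 / e" using e by (auto, smt (verit) divide_nonneg_pos)
      have "cmod \<zeta> * 1 \<le> cmod \<zeta> * cmod \<zeta>" using z1 by (intro mult_left_mono) auto
      then have "cmod \<zeta> ^ 2 \<ge> cmod \<zeta> * 1" by (simp add: power2_eq_square)
      then have "cmod \<zeta> ^ 2 \<ge> 32 / e" using z1 by linarith
      then have "2 / cmod \<zeta> ^ 2 \<le> 2 / (32 / e)" using e zpos by (intro divide_left_mono) auto
      also have "\<dots> = e / 16" using e by simp
      finally show ?thesis .
    qed
    have E: "cmod (F_transform \<mu> \<zeta> - \<zeta> + 1 / \<zeta>) \<le> 2 * (2 / cmod \<zeta> ^ 2 + cmod (Rf \<zeta>)) / cmod \<zeta>"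
      by (rule F_refined[OF z2 k zk]) (use Rfb \<eta> in linarith)
    also have "\<dots> \<le> 2 * (e / 8) / cmod \<zeta>"
      using zsq Rfb \<eta> zpos by (intro divide_right_mono mult_left_mono) auto
    also have "\<dots> \<le> 2 * (e / 8) / (cmod w / 2)" using zbig wpos zpos e by (intro divide_left_mono) auto
    also have "\<dots> = (e / 2) / cmod w" by simp
    finally have E2: "cmod (F_transform \<mu> \<zeta> - \<zeta> + 1 / \<zeta>) \<le> (e / 2) / cmod w" .
    have "cmod (1 / \<zeta> - 1 / w) = cmod (w - \<zeta>) / (cmod \<zeta> * cmod w)"
      using zpos wpos by (simp add: field_simps norm_divide norm_mult)
    also have "\<dots> \<le> 1 / ((cmod w / 2) * cmod w)"
      using d1 zbig wpos by (intro frac_le mult_right_mono) (auto simp: norm_minus_commute)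
    also have "\<dots> = (2 / cmod w) / cmod w" by simp
    also have "\<dots> \<le> (e / 2) / cmod w"
    proof (intro divide_right_mono)
      have "cmod w \<ge> 4 / e" using wR Rge by linarith
      then show "2 / cmod w \<le> e / 2" using e wpos by (simp add: field_simps)
    qed auto
    finally have D: "cmod (1 / \<zeta> - 1 / w) \<le> (e / 2) / cmod w" .
    have eqE: "hmu w - w - 1 / w = (1 / \<zeta> - 1 / w) - (F_transform \<mu> \<zeta> - \<zeta> + 1 / \<zeta>)"
      using F\<zeta> by (simp add: \<zeta>_def)
    have "cmod (hmu w - w - 1 / w) \<le> cmod (1 / \<zeta> - 1 / w) + cmod (F_transform \<mu> \<zeta> - \<zeta> + 1 / \<zeta>)"
      unfolding eqE by (rule norm_triangle_ineq4)
    also have "\<dots> \<le> e / cmod w" using D E2 by (simp add: field_simps)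
    finally show "cmod (hmu w - w - 1 / w) \<le> e / cmod w" .
  qed
qed

end

lemma sqrt_eventually_gt: "\<exists>N. \<forall>n\<ge>N. sqrt (real n) > T"
proof (intro exI[of _ "nat \<lceil>T^2\<rceil> + 1"] allI impI)
  fix n :: nat assume n: "n \<ge> nat \<lceil>T^2\<rceil> + 1"
  have "T^2 \<le> real (nat \<lceil>T^2\<rceil>)" by linarith
  then have "T^2 < real n" using n by linarith
  then show "sqrt (real n) > T" by (rule real_less_rsqrt)
qed

theorem mainTheorem2:
  fixes \<mu> :: "real measure" and P :: "nat \<Rightarrow> real measure" and \<alpha> \<beta> :: real
  assumes "prob_space \<mu>" and "sets \<mu> = sets borel"
    and "integrable \<mu> (\<lambda>x. x ^ 2)"
    and "(\<integral>x. x \<partial>\<mu>) = 0"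
    and "(\<integral>x. x ^ 2 \<partial>\<mu>) = 1"
    and "free_powers \<mu> P"
    and "\<alpha> > 0" and "\<beta> > 0"
  shows "(\<exists>N. \<forall>n\<ge>N.
      (\<forall>z\<in>trunc_cone \<alpha> \<beta>. complex_of_real (sqrt (real n)) * z \<in> phi_dom \<mu>) \<and>
      (\<forall>z\<in>trunc_cone \<alpha> \<beta>. z \<in> phi_dom (normalized_power P n) \<longrightarrow>
         complex_of_real (sqrt (real n)) * voiculescu \<mu> (complex_of_real (sqrt (real n)) * z)
           = voiculescu (normalized_power P n) z)) \<and>
    ((\<lambda>n. SUP z\<in>trunc_cone \<alpha> \<beta>.
            ereal (cmod (complex_of_real (sqrt (real n)) *
               voiculescu \<mu> (complex_of_real (sqrt (real n)) * z) - 1 / z)))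
         \<longlonglongrightarrow> 0)"
proof -
  interpret mv \<mu> using assms(1-5) by (simp add: mv_def)
  have fp: "free_powers \<mu> P" and a: "\<alpha> > 0" and b: "\<beta> > 0" using assms by auto
  define m where "m = \<beta> * \<alpha> / (1 + \<alpha>)"
  have m0: "m > 0" using a b by (simp add: m_def)
  have zm: "Im z > m" if "z \<in> trunc_cone \<alpha> \<beta>" for z using trunc_Im[OF that a] by (simp add: m_def)
  have scale: "Im (complex_of_real s * z) = s * Im z" "Re (complex_of_real s * z) = s * Re z"
    "cmod (complex_of_real s * z) = \<bar>s\<bar> * cmod z" for s z by (auto simp: norm_mult)
  have big: "Im (complex_of_real (sqrt (real n)) * z) > 18"
    if n: "sqrt (real n) > max 1 (18 / m)" and z: "z \<in> trunc_cone \<alpha> \<beta>" for n z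
  proof -
    have "sqrt (real n) * m > (18 / m) * m" using n m0 by (intro mult_strict_right_mono) auto
    also have "sqrt (real n) * m \<le> sqrt (real n) * Im z" using zm[OF z] by (intro mult_left_mono) auto
    finally show ?thesis using m0 unfolding scale by simp
  qed
  obtain N1 where N1: "\<And>n. n \<ge> N1 \<Longrightarrow> sqrt (real n) > max 1 (18 / m)"
    using sqrt_eventually_gt by blast
  have part1: "\<exists>N. \<forall>n\<ge>N.
      (\<forall>z\<in>trunc_cone \<alpha> \<beta>. complex_of_real (sqrt (real n)) * z \<in> phi_dom \<mu>) \<and>
      (\<forall>z\<in>trunc_cone \<alpha> \<beta>. z \<in> phi_dom (normalized_power P n) \<longrightarrow>
         complex_of_real (sqrt (real n)) * voiculescu \<mu> (complex_of_real (sqrt (real n)) * z)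
           = voiculescu (normalized_power P n) z)"
  proof (intro exI[of _ N1] allI impI conjI ballI)
    fix n z assume n: "n \<ge> N1" and z: "z \<in> trunc_cone \<alpha> \<beta>"
    have b18: "Im (complex_of_real (sqrt (real n)) * z) > 18" by (rule big[OF N1[OF n] z])
    then show "complex_of_real (sqrt (real n)) * z \<in> phi_dom \<mu>" using H18_phi_dom by auto
    have n1: "n \<ge> 1" using N1[OF n] by (cases n) auto
    assume "z \<in> phi_dom (normalized_power P n)"
    then show "complex_of_real (sqrt (real n)) * voiculescu \<mu> (complex_of_real (sqrt (real n)) * z)
           = voiculescu (normalized_power P n) z"
      by (rule part2[OF fp n1 _ b18])
  qed
  define S where "S = (\<lambda>n. SUP z\<in>trunc_cone \<alpha> \<beta>.
            ereal (cmod (complex_of_real (sqrt (real n)) *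
               voiculescu \<mu> (complex_of_real (sqrt (real n)) * z) - 1 / z)))"
  have z0: "\<i> * complex_of_real (\<beta> + 1) \<in> trunc_cone \<alpha> \<beta>"
    using b by (simp add: trunc_cone_def norm_mult)
  have Sge: "S n \<ge> 0" for n
    unfolding S_def by (rule SUP_upper2[OF z0]) simp
  have Sle: "\<forall>\<^sub>F n in sequentially. S n \<le> ereal r" if r: "r > 0" for r
  proof -
    obtain R where R: "\<And>w. Im w > \<alpha> * \<bar>Re w\<bar> \<Longrightarrow> cmod w > R \<Longrightarrow> cmod (hmu w - w - 1 / w) \<le> r * \<beta> / cmod w"
      using hmu_asym[OF a, of "r * \<beta>"] r b by auto
    obtain N2 where N2: "\<And>n. n \<ge> N2 \<Longrightarrow> sqrt (real n) > max (max 1 (18 / m)) (R / \<beta>)"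
      using sqrt_eventually_gt by blast
    show ?thesis unfolding eventually_sequentially
    proof (intro exI[of _ N2] allI impI)
      fix n assume n: "n \<ge> N2"
      define s where "s = sqrt (real n)"
      have s: "s > max 1 (18 / m)" "s > R / \<beta>" using N2[OF n] by (auto simp: s_def)
      show "S n \<le> ereal r" unfolding S_def
      proof (rule SUP_least)
        fix z assume z: "z \<in> trunc_cone \<alpha> \<beta>"
        have zc: "Im z > \<alpha> * \<bar>Re z\<bar>" "cmod z > \<beta>" using z by (auto simp: trunc_cone_def)
        have s1: "s > 1" using s by simp
        define w where "w = complex_of_real s * z"
        have w18: "Im w > 18" unfolding w_def s_def by (rule big[OF _ z]) (use s in \<open>simp add: s_def\<close>)
        have wc: "Im w > \<alpha> * \<bar>Re w\<bar>" using zc s1 unfolding w_def scale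
          by (simp add: abs_mult)
        have "s * \<beta> > (R / \<beta>) * \<beta>" using s b by (intro mult_strict_right_mono) auto
        also have "s * \<beta> \<le> s * cmod z" using zc s1 by (intro mult_left_mono) auto
        finally have wR: "cmod w > R" using b s1 unfolding w_def scale by simp
        have z0': "z \<noteq> 0" using zc b by auto
        have "complex_of_real s * voiculescu \<mu> w - 1 / z = complex_of_real s * (hmu w - w - 1 / w)"
        proof -
          have inv: "complex_of_real s * (1 / w) = 1 / z" using s1 z0' by (simp add: w_def)
          have "complex_of_real s * (hmu w - w - 1 / w) = complex_of_real s * (hmu w - w) - complex_of_real s * (1 / w)"
            by (simp only: right_diff_distrib)
          then show ?thesis using voic_mu[OF w18] inv by simp
        qed
        then have "cmod (complex_of_real s * voiculescu \<mu> w - 1 / z) = s * cmod (hmu w - w - 1 / w)"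
          using s1 by (simp add: norm_mult)
        also have "\<dots> \<le> s * (r * \<beta> / cmod w)" using R[OF wc wR] s1 by (intro mult_left_mono) auto
        also have "\<dots> = r * \<beta> / cmod z" using s1 z0' unfolding w_def scale by simp
        also have "\<dots> \<le> r * \<beta> / \<beta>" using zc r b by (intro divide_left_mono mult_pos_pos) auto
        also have "\<dots> = r" using b by simp
        finally show "ereal (cmod (complex_of_real (sqrt (real n)) *
               voiculescu \<mu> (complex_of_real (sqrt (real n)) * z) - 1 / z)) \<le> ereal r"
          by (simp add: s_def w_def)
      qed
    qed
  qed
  have "S \<longlonglongrightarrow> 0"
  proof (rule order_tendstoI)
    fix y :: ereal assume "y < 0"
    then show "\<forall>\<^sub>F n in sequentially. y < S n" using Sge by (intro always_eventually allI) (rule order.strict_trans2)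
  next
    fix y :: ereal assume "y > 0"
    then obtain r where r: "0 < ereal r" "ereal r < y" using ereal_dense2 by blast
    then have "\<forall>\<^sub>F n in sequentially. S n \<le> ereal r" by (intro Sle) simp
    then show "\<forall>\<^sub>F n in sequentially. S n < y" by eventually_elim (use r in auto)
  qed
  then show ?thesis using part1 unfolding S_def by blast
qed

end
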